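(* Fix $b>1$ and $(a,E,c)\in\mathcal{B}$, let $\mu=\mu(\cdot;a,E,c)$ be the associated $T$-periodic even traveling wave profile, and let $\mu_+(a,E,c):=\mu(0;a,E,c)$ denote the global maximum of $\mu$. Then $\mu_{xx}(0)<0$ and \[ \{\mu_+,\omega_1\}_{E,c}>0. \]
   Context: Fix $b>1$. For $c>0$, $a>0$, $\varphi<c$ let $V(\varphi;a,c)=-\tfrac12\varphi^2+\frac{a}{(b-1)(c-\varphi)^{b-1}}$. For $0<a<\frac{b^bc^{b+1}}{(b+1)^{b+1}}$ the equation $\varphi(c-\varphi)^b=a$ has exactly two solutions $\varphi_1\in(0,\frac{c}{b+1})$, $\varphi_2\in(\frac{c}{b+1},c)$. Let $\mathcal{B}=\{(a,E,c): c>0,\ 0<a<\frac{b^bc^{b+1}}{(b+1)^{b+1}},\ V(\varphi_2;a,c)<E<V(\varphi_1;a,c)\}$. For $(a,E,c)\in\mathcal{B}$ let $\varphi(\cdot;a,E,c)$ be the smooth periodic solution of $\tfrac12(\varphi')^2=E-V(\varphi;a,c)$ with $\varphi<c$, translated so that it is even with its maximum at $x=0$; it satisfies $\varphi-\varphi''=a/(c-\varphi)^b$, and $u(x,t)=\varphi(x-ct)$ is a traveling wave of $u_t-u_{txx}+(b+1)uu_x=bu_xu_{xx}+uu_{xxx}$. Set $\mu(x;a,E,c)=a/(c-\varphi(x;a,E,c))^b$ (the momentum density), a traveling wave of $m_t+um_x+bmu_x=0$. Let $\omega_1(a,E,c)=\frac{1}{2a^{1/b}}[2(b-1)E+(b-1)c^2]$.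 Jacobian notation: $\{f,g\}_{E,c}=f_Eg_c-f_cg_E$, with $f,g$ regarded as functions of $(a,E,c)$. *)

theory Defs
  imports "HOL-Analysis.Analysis"
begin

definition Vpot :: "real \<Rightarrow> real \<Rightarrow> real \<Rightarrow> real \<Rightarrow> real" where
  "Vpot b a c p = - (p\<^sup>2) / 2 + a / ((b - 1) * (c - p) powr (b - 1))"

definition phi1 :: "real \<Rightarrow> real \<Rightarrow> real \<Rightarrow> real" where
  "phi1 b a c = (THE p. 0 < p \<and> p < c / (b + 1) \<and> p * (c - p) powr b = a)"

definition phi2 :: "real \<Rightarrow> real \<Rightarrow> real \<Rightarrow> real" where
  "phi2 b a c = (THE p. c / (b + 1) < p \<and> p < c \<and> p * (c - p) powr b = a)"

definition regionB :: "real \<Rightarrow> (real \<times> real \<times> real) set" where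
  "regionB b = {(a, E, c). 0 < c \<and> 0 < a \<and>
      a < b powr b * c powr (b + 1) / (b + 1) powr (b + 1) \<and>
      Vpot b a c (phi2 b a c) < E \<and> E < Vpot b a c (phi1 b a c)}"

definition is_profile :: "real \<Rightarrow> real \<Rightarrow> real \<Rightarrow> real \<Rightarrow> (real \<Rightarrow> real) \<Rightarrow> bool" where
  "is_profile b a E c phi \<longleftrightarrow>
     (\<forall>x. phi differentiable (at x)) \<and>
     (\<forall>x. deriv phi differentiable (at x)) \<and>
     (\<forall>x. phi x < c) \<and>
     (\<forall>x. (deriv phi x)\<^sup>2 / 2 = E - Vpot b a c (phi x)) \<and>
     (\<forall>x. phi x - deriv (deriv phi) x = a / (c - phi x) powr b) \<and>
     (\<exists>T>0. \<forall>x. phi (x + T) = phi x) \<and>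
     (\<forall>x. phi (- x) = phi x) \<and>
     (\<forall>x. phi x \<le> phi 0)"

definition momentum :: "real \<Rightarrow> real \<Rightarrow> real \<Rightarrow> (real \<Rightarrow> real) \<Rightarrow> real \<Rightarrow> real" where
  "momentum b a c phi x = a / (c - phi x) powr b"

definition omega1 :: "real \<Rightarrow> real \<Rightarrow> real \<Rightarrow> real \<Rightarrow> real" where
  "omega1 b a E c = (2 * (b - 1) * E + (b - 1) * c\<^sup>2) / (2 * a powr (1 / b))"

definition has_partials_Ec ::
  "(real \<Rightarrow> real \<Rightarrow> real \<Rightarrow> real) \<Rightarrow> real \<Rightarrow> real \<Rightarrow> real \<Rightarrow> real \<Rightarrow> real \<Rightarrow> bool" where
  "has_partials_Ec f a E c fE fc \<longleftrightarrow>
     ((\<lambda>e. f a e c) has_real_derivative fE) (at E) \<and>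
     ((\<lambda>k. f a E k) has_real_derivative fc) (at c)"

end

theory Submission
  imports Defs
begin

definition gg :: "real \<Rightarrow> real \<Rightarrow> real \<Rightarrow> real" where
  "gg b c p = p * (c - p) powr b"

lemma gg_deriv:
  assumes b: "b > 1" and p: "p < c"
  shows "DERIV (gg b c) p :> (c - p) powr (b - 1) * (c - (b + 1) * p)"
proof -
  have d1: "DERIV (\<lambda>p. c - p) p :> -1" by (auto intro!: derivative_eq_intros)
  have d2: "DERIV (\<lambda>p. (c - p) powr b) p :> b * (c - p) powr (b - 1) * (-1)"
    using DERIV_fun_powr[OF d1, of b] p by simp
  have d3: "DERIV (gg b c) p :> 1 * (c - p) powr b + p * (b * (c - p) powr (b - 1) * (-1))"
    unfolding gg_def using DERIV_mult'[OF DERIV_ident d2] by (simp add: algebra_simps)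
  have e: "(c - p) powr b = (c - p) * (c - p) powr (b - 1)"
  proof -
    have "(c - p) powr b = (c - p) powr (1 + (b - 1))" by simp
    also have "\<dots> = (c - p) powr 1 * (c - p) powr (b - 1)" by (rule powr_add)
    finally show ?thesis using p by simp
  qed
  show ?thesis using d3 unfolding e by (simp add: algebra_simps)
qed

lemma Vpot_alt:
  assumes b: "b > 1" and p: "p < c"
  shows "Vpot b a c p = - (p\<^sup>2) / 2 + a / (b - 1) * (c - p) powr (1 - b)"
proof -
  have "(c - p) powr (1 - b) = (c - p) / (c - p) powr b" using p by (simp add: powr_diff)
  moreover have "(c - p) powr (b - 1) = (c - p) powr b / (c - p)" using p by (simp add: powr_diff)
  have "(c - p) powr (1 - b) = 1 / (c - p) powr (b - 1)"
    using powr_minus_divide[of "c - p" "b - 1"] by simp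
  then show ?thesis unfolding Vpot_def by simp
qed

lemma Vpot_deriv:
  assumes b: "b > 1" and p: "p < c"
  shows "DERIV (Vpot b a c) p :> - p + a / (c - p) powr b"
proof -
  have d1: "DERIV (\<lambda>p. c - p) p :> -1" by (auto intro!: derivative_eq_intros)
  have d2: "DERIV (\<lambda>p. (c - p) powr (1 - b)) p :> (1 - b) * (c - p) powr (1 - b - 1) * (-1)"
    using DERIV_fun_powr[OF d1, of "1 - b"] p by simp
  have d3: "DERIV (\<lambda>p. - (p\<^sup>2) / 2 + a / (b - 1) * (c - p) powr (1 - b)) p :>
      - (2 * p) / 2 + a / (b - 1) * ((1 - b) * (c - p) powr (1 - b - 1) * (-1))"
    using p b by (auto intro!: derivative_eq_intros d2)
  have ev: "\<forall>\<^sub>F q in nhds p. Vpot b a c q = - (q\<^sup>2) / 2 + a / (b - 1) * (c - q) powr (1 - b)"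
  proof -
    have "\<forall>\<^sub>F q in nhds p. q < c" using eventually_nhds_in_open[of "{..<c}" p] p by simp
    then show ?thesis by eventually_elim (use b Vpot_alt in auto)
  qed
  have d4: "DERIV (Vpot b a c) p :> - (2 * p) / 2 + a / (b - 1) * ((1 - b) * (c - p) powr (1 - b - 1) * (-1))"
    using DERIV_cong_ev[OF refl ev refl] d3 by simp
  have e: "a / (b - 1) * ((1 - b) * (c - p) powr (1 - b - 1) * (-1)) = a / (c - p) powr b"
  proof -
    have "(c - p) powr (1 - b - 1) = 1 / (c - p) powr b"
      using powr_minus_divide[of "c - p" b] by simp
    moreover have "\<And>Y. a / (b - 1) * ((1 - b) * Y * (-1)) = a * Y" using b by (simp add: field_simps)
    ultimately show ?thesis by (metis (no_types) mult_1_right times_divide_eq_right)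
  qed
  show ?thesis using d4 unfolding e by simp
qed


lemma gg_up:
  assumes b: "b > 1" and c: "c > 0" and xy: "x < y" and y: "y \<le> c / (b + 1)"
  shows "gg b c x < gg b c y"
proof -
  have cb: "c / (b + 1) < c" using b c by (simp add: divide_less_eq)
  show ?thesis
  proof (rule DERIV_pos_imp_increasing_open[OF xy])
    fix z assume z: "x < z" "z < y"
    then have zc: "z < c" using y cb by linarith
    have yb: "(b + 1) * y \<le> c" using y b by (simp add: pos_le_divide_eq mult.commute)
    have "(b + 1) * z < (b + 1) * y" using z b by simp
    then have "(b + 1) * z < c" using yb by linarith
    then have "(c - z) powr (b - 1) * (c - (b + 1) * z) > 0" using zc by simp
    then show "\<exists>d. DERIV (gg b c) z :> d \<and> d > 0" using gg_deriv[OF b zc] by blast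
  next
    show "continuous_on {x..y} (gg b c)"
    proof (rule DERIV_atLeastAtMost_imp_continuous_on)
      fix z assume "x \<le> z" "z \<le> y" then have "z < c" using y cb by linarith
      then show "\<exists>d. DERIV (gg b c) z :> d" using gg_deriv[OF b] by blast
    qed
  qed
qed

lemma gg_up_le:
  assumes b: "b > 1" and c: "c > 0" and xy: "x \<le> y" and y: "y \<le> c / (b + 1)"
  shows "gg b c x \<le> gg b c y"
  using gg_up[OF b c _ y, of x] xy by (cases "x = y") auto

lemma gg_down:
  assumes b: "b > 1" and c: "c > 0" and xy: "x < y" and x: "c / (b + 1) \<le> x" and y: "y < c"
  shows "gg b c y < gg b c x"
proof (rule DERIV_neg_imp_decreasing_open[OF xy])
  fix z assume z: "x < z" "z < y"
  then have zc: "z < c" using y by linarith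
  have xb: "c \<le> (b + 1) * x" using x b by (simp add: pos_divide_le_eq mult.commute)
  have "(b + 1) * x < (b + 1) * z" using z b by simp
  then have "c < (b + 1) * z" using xb by linarith
  then have "(c - z) powr (b - 1) * (c - (b + 1) * z) < 0" using zc by (simp add: mult_pos_neg)
  then show "\<exists>d. DERIV (gg b c) z :> d \<and> d < 0" using gg_deriv[OF b zc] by blast
next
  show "continuous_on {x..y} (gg b c)"
  proof (rule DERIV_atLeastAtMost_imp_continuous_on)
    fix z assume "x \<le> z" "z \<le> y" then have "z < c" using y by linarith
    then show "\<exists>d. DERIV (gg b c) z :> d" using gg_deriv[OF b] by blast
  qed
qed

lemma gg_cont: "b > 0 \<Longrightarrow> continuous_on {x..c} (gg b c)"
  unfolding gg_def
  by (intro continuous_on_mult continuous_on_id continuous_on_powr' continuous_on_diff continuous_on_const) auto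

lemma gg_c: "b > 0 \<Longrightarrow> gg b c c = 0" unfolding gg_def by simp

lemma gmax_eq:
  assumes b: "b > 1" and c: "c > 0"
  shows "b powr b * c powr (b + 1) / (b + 1) powr (b + 1) = gg b c (c / (b + 1))"
proof -
  have "c - c / (b + 1) = b * c / (b + 1)" using b by (simp add: field_simps)
  then have "gg b c (c / (b + 1)) = c / (b + 1) * (b * c / (b + 1)) powr b" unfolding gg_def by simp
  also have "\<dots> = c / (b + 1) * (b powr b * c powr b / (b + 1) powr b)"
    using b c by (simp add: powr_divide powr_mult)
  also have "\<dots> = b powr b * (c * c powr b) / ((b + 1) * (b + 1) powr b)" by (simp add: field_simps)
  also have "\<dots> = b powr b * c powr (b + 1) / (b + 1) powr (b + 1)"
    using b c by (simp add: powr_add mult_ac)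
  finally show ?thesis by simp
qed

lemma phi1_props:
  assumes b: "b > 1" and c: "c > 0" and a: "a > 0" and am: "a < gg b c (c / (b + 1))"
  shows "0 < phi1 b a c \<and> phi1 b a c < c / (b + 1) \<and> gg b c (phi1 b a c) = a"
proof -
  have cb: "c / (b + 1) < c" using b c by (simp add: divide_less_eq)
  have cont: "continuous_on {0..c / (b + 1)} (gg b c)"
    by (rule continuous_on_subset[OF gg_cont[of b 0 c]]) (use b cb in auto)
  obtain x where x: "0 \<le> x" "x \<le> c / (b + 1)" "gg b c x = a"
    using IVT'[of "gg b c" 0 a "c / (b + 1)", OF _ _ _ cont] am a b c unfolding gg_def by auto
  have x0: "x \<noteq> 0" using x a unfolding gg_def by auto
  have x1: "x \<noteq> c / (b + 1)" using x am by auto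
  have P: "0 < x \<and> x < c / (b + 1) \<and> x * (c - x) powr b = a" using x x0 x1 unfolding gg_def by auto
  have U: "y = x" if "0 < y \<and> y < c / (b + 1) \<and> y * (c - y) powr b = a" for y
  proof (rule ccontr)
    assume "y \<noteq> x"
    then consider "y < x" | "x < y" by linarith
    then show False
    proof cases
      case 1 then show ?thesis using gg_up[OF b c 1 x(2)] that x unfolding gg_def by simp
    next
      case 2 then show ?thesis using gg_up[OF b c 2] that x unfolding gg_def by simp
    qed
  qed
  have "phi1 b a c = x" unfolding phi1_def by (rule the_equality, rule P, rule U, assumption)
  then show ?thesis using P unfolding gg_def by simp
qed

lemma phi2_props:
  assumes b: "b > 1" and c: "c > 0" and a: "a > 0" and am: "a < gg b c (c / (b + 1))"
  shows "c / (b + 1) < phi2 b a c \<and> phi2 b a c < c \<and> gg b c (phi2 b a c) = a"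
proof -
  have cb: "c / (b + 1) < c" using b c by (simp add: divide_less_eq)
  have cont: "continuous_on {c / (b + 1)..c} (gg b c)"
    by (rule gg_cont) (use b in auto)
  obtain x where x: "c / (b + 1) \<le> x" "x \<le> c" "gg b c x = a"
    using IVT2'[of "gg b c" c a "c / (b + 1)", OF _ _ _ cont] am a b c cb gg_c[of b c] by auto
  have x0: "x \<noteq> c" using x a gg_c[of b c] b by auto
  have x1: "x \<noteq> c / (b + 1)" using x am by auto
  have P: "c / (b + 1) < x \<and> x < c \<and> x * (c - x) powr b = a" using x x0 x1 unfolding gg_def by auto
  have U: "y = x" if "c / (b + 1) < y \<and> y < c \<and> y * (c - y) powr b = a" for y
  proof (rule ccontr)
    assume "y \<noteq> x"
    then consider "y < x" | "x < y" by linarith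
    then show False
    proof cases
      case 1
      have "gg b c x < gg b c y" by (rule gg_down[OF b c 1]) (use that x x0 in auto)
      then show ?thesis using that x unfolding gg_def by simp
    next
      case 2
      have "gg b c y < gg b c x" by (rule gg_down[OF b c 2]) (use that x in auto)
      then show ?thesis using that x unfolding gg_def by simp
    qed
  qed
  have "phi2 b a c = x" unfolding phi2_def by (rule the_equality, rule P, rule U, assumption)
  then show ?thesis using P unfolding gg_def by simp
qed


lemma Vd_pos_iff:
  assumes p: "p < c" and b: "b > 1"
  shows "(- p + a / (c - p) powr b > 0) \<longleftrightarrow> gg b c p < a"
proof -
  have X: "(c - p) powr b > 0" using p by simp
  have "(- p + a / (c - p) powr b > 0) \<longleftrightarrow> (p < a / (c - p) powr b)" by linarith
  also have "\<dots> \<longleftrightarrow> p * (c - p) powr b < a" using X by (simp add: pos_less_divide_eq)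
  finally show ?thesis unfolding gg_def .
qed

lemma Vd_neg_iff:
  assumes p: "p < c" and b: "b > 1"
  shows "(- p + a / (c - p) powr b < 0) \<longleftrightarrow> gg b c p > a"
proof -
  have X: "(c - p) powr b > 0" using p by simp
  have "(- p + a / (c - p) powr b < 0) \<longleftrightarrow> (a / (c - p) powr b < p)" by linarith
  also have "\<dots> \<longleftrightarrow> a < p * (c - p) powr b" using X by (simp add: pos_divide_less_eq)
  finally show ?thesis unfolding gg_def .
qed

lemma Vpot_cont_on:
  assumes b: "b > 1" and y: "y < c"
  shows "continuous_on {x..y} (Vpot b a c)"
proof (rule DERIV_atLeastAtMost_imp_continuous_on)
  fix z assume "x \<le> z" "z \<le> y" then have "z < c" using y by linarith
  then show "\<exists>d. DERIV (Vpot b a c) z :> d" using Vpot_deriv[OF b] by blast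
qed

lemma V_incr:
  assumes b: "b > 1" and xy: "x < y" and y: "y < c"
    and g: "\<And>z. x < z \<Longrightarrow> z < y \<Longrightarrow> gg b c z < a"
  shows "Vpot b a c x < Vpot b a c y"
proof (rule DERIV_pos_imp_increasing_open[OF xy _ Vpot_cont_on[OF b y]])
  fix z assume z: "x < z" "z < y"
  then have zc: "z < c" using y by linarith
  show "\<exists>d. DERIV (Vpot b a c) z :> d \<and> d > 0"
    using Vpot_deriv[OF b zc] Vd_pos_iff[OF zc b] g[OF z] by blast
qed

lemma V_decr:
  assumes b: "b > 1" and xy: "x < y" and y: "y < c"
    and g: "\<And>z. x < z \<Longrightarrow> z < y \<Longrightarrow> gg b c z > a"
  shows "Vpot b a c y < Vpot b a c x"
proof (rule DERIV_neg_imp_decreasing_open[OF xy _ Vpot_cont_on[OF b y]])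
  fix z assume z: "x < z" "z < y"
  then have zc: "z < c" using y by linarith
  show "\<exists>d. DERIV (Vpot b a c) z :> d \<and> d < 0"
    using Vpot_deriv[OF b zc] Vd_neg_iff[OF zc b] g[OF z] by blast
qed

lemma phi1_max:
  assumes b: "b > 1" and c: "c > 0" and a: "a > 0" and am: "a < gg b c (c / (b + 1))"
    and r: "0 < r" "r \<le> c / (b + 1)"
  shows "Vpot b a c r \<le> Vpot b a c (phi1 b a c)"
proof -
  note P = phi1_props[OF b c a am]
  have cb: "c / (b + 1) < c" using b c by (simp add: divide_less_eq)
  consider "r < phi1 b a c" | "r = phi1 b a c" | "phi1 b a c < r" by linarith
  then show ?thesis
  proof cases
    case 1
    have "Vpot b a c r < Vpot b a c (phi1 b a c)"
    proof (rule V_incr[OF b 1])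
      show "phi1 b a c < c" using P cb by linarith
      fix z assume z: "r < z" "z < phi1 b a c"
      show "gg b c z < a" using gg_up[OF b c z(2)] P by simp
    qed
    then show ?thesis by simp
  next
    case 3
    have "Vpot b a c r < Vpot b a c (phi1 b a c)"
    proof (rule V_decr[OF b 3])
      show "r < c" using r cb by linarith
      fix z assume z: "phi1 b a c < z" "z < r"
      show "gg b c z > a" using gg_up[OF b c z(1)] P z r by simp
    qed
    then show ?thesis by simp
  qed simp
qed

lemma phi2_min:
  assumes b: "b > 1" and c: "c > 0" and a: "a > 0" and am: "a < gg b c (c / (b + 1))"
    and q: "c / (b + 1) \<le> q" "q < c"
  shows "Vpot b a c (phi2 b a c) \<le> Vpot b a c q"
proof -
  note P = phi2_props[OF b c a am]
  consider "q < phi2 b a c" | "q = phi2 b a c" | "phi2 b a c < q" by linarith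
  then show ?thesis
  proof cases
    case 3
    have "Vpot b a c (phi2 b a c) < Vpot b a c q"
    proof (rule V_incr[OF b 3 q(2)])
      fix z assume z: "phi2 b a c < z" "z < q"
      show "gg b c z < a" using gg_down[OF b c z(1)] P z q by simp
    qed
    then show ?thesis by simp
  next
    case 1
    have "Vpot b a c (phi2 b a c) < Vpot b a c q"
    proof (rule V_decr[OF b 1])
      show "phi2 b a c < c" using P by simp
      fix z assume z: "q < z" "z < phi2 b a c"
      show "gg b c z > a" using gg_down[OF b c z(2)] P z q by simp
    qed
    then show ?thesis by simp
  qed simp
qed

definition Sreg :: "real \<Rightarrow> real \<Rightarrow> real \<Rightarrow> real \<Rightarrow> bool" where
  "Sreg b a c q \<longleftrightarrow> c / (b + 1) < q \<and> q < c \<and> gg b c q < a"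

lemma Sreg_unique:
  assumes b: "b > 1" and c: "c > 0" and S1: "Sreg b a c q1" and S2: "Sreg b a c q2"
    and V: "Vpot b a c q1 = Vpot b a c q2"
  shows "q1 = q2"
proof -
  have *: "Vpot b a c x < Vpot b a c y" if "Sreg b a c x" "Sreg b a c y" "x < y" for x y
  proof (rule V_incr[OF b \<open>x < y\<close>])
    show "y < c" using that unfolding Sreg_def by simp
    fix z assume z: "x < z" "z < y"
    have "gg b c z < gg b c x" by (rule gg_down[OF b c z(1)]) (use that z in \<open>auto simp: Sreg_def\<close>)
    then show "gg b c z < a" using that unfolding Sreg_def by simp
  qed
  show ?thesis using *[OF S1 S2] *[OF S2 S1] V by (cases q1 q2 rule: linorder_cases) auto
qed


lemma regionB_D:
  assumes b: "b > 1" and inB: "(a, E, c) \<in> regionB b"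
  shows "c > 0" "a > 0" "a < gg b c (c / (b + 1))"
    "Vpot b a c (phi2 b a c) < E" "E < Vpot b a c (phi1 b a c)"
  using inB gmax_eq[OF b] unfolding regionB_def by auto

lemma regionB_I:
  assumes b: "b > 1" and "c > 0" "a > 0" "a < gg b c (c / (b + 1))"
    "Vpot b a c (phi2 b a c) < E" "E < Vpot b a c (phi1 b a c)"
  shows "(a, E, c) \<in> regionB b"
  using assms gmax_eq[OF b \<open>c > 0\<close>] unfolding regionB_def by auto

lemma profile_facts:
  assumes b: "b > 1" and inB: "(a, E, c) \<in> regionB b" and prof: "is_profile b a E c phi"
  shows "Sreg b a c (phi 0)" "Vpot b a c (phi 0) = E" "deriv phi 0 = 0"
    "deriv (deriv phi) 0 = phi 0 - a / (c - phi 0) powr b"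
    "\<And>x. DERIV phi x :> deriv phi x" "\<And>x. DERIV (deriv phi) x :> deriv (deriv phi) x"
    "\<And>x. phi x < c"
proof -
  note R = regionB_D[OF b inB]
  have cb: "c / (b + 1) < c" using b R(1) by (simp add: divide_less_eq)
  have D1: "\<And>x. DERIV phi x :> deriv phi x"
    using prof unfolding is_profile_def by (simp add: DERIV_deriv_iff_real_differentiable)
  have D2: "\<And>x. DERIV (deriv phi) x :> deriv (deriv phi) x"
    using prof unfolding is_profile_def by (simp add: DERIV_deriv_iff_real_differentiable)
  have lt: "\<And>x. phi x < c" and en: "\<And>x. (deriv phi x)\<^sup>2 / 2 = E - Vpot b a c (phi x)"
    and ode: "\<And>x. phi x - deriv (deriv phi) x = a / (c - phi x) powr b"
    and per: "\<exists>T>0. \<forall>x. phi (x + T) = phi x" and mx: "\<And>x. phi x \<le> phi 0"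
    using prof unfolding is_profile_def by auto
  have d0: "deriv phi 0 = 0"
    by (rule DERIV_local_max[OF D1 zero_less_one]) (use mx in auto)
  have E0: "Vpot b a c (phi 0) = E" using en[of 0] d0 by simp
  have dd: "\<And>x. deriv (deriv phi) x = phi x - a / (c - phi x) powr b" using ode by (simp add: algebra_simps)
  have contphi: "\<And>x y. continuous_on {x..y} phi"
    by (rule DERIV_atLeastAtMost_imp_continuous_on) (use D1 in blast)
  let ?p = "phi 0"
  have S: "Sreg b a c ?p"
  proof -
    have A: "\<not> gg b c ?p > a"
    proof
      assume g: "gg b c ?p > a"
      have pos: "deriv (deriv phi) 0 > 0" using Vd_neg_iff[OF lt[of 0] b, of a] g dd[of 0] by simp
      obtain d where d: "d > 0" "\<And>h. h > 0 \<Longrightarrow> h < d \<Longrightarrow> deriv phi 0 < deriv phi (0 + h)"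
        using DERIV_pos_inc_right[OF D2 pos] by blast
      have "phi 0 < phi (d / 2)"
      proof (rule DERIV_pos_imp_increasing_open[OF _ _ contphi])
        show "0 < d / 2" using d by simp
        fix z assume "0 < z" "z < d / 2"
        then show "\<exists>y. DERIV phi z :> y \<and> y > 0" using D1[of z] d(2)[of z] d0 by auto
      qed
      then show False using mx[of "d / 2"] by simp
    qed
    have B: "\<not> gg b c ?p = a"
    proof
      assume g: "gg b c ?p = a"
      have p0: "?p > 0"
      proof -
        have X: "(c - ?p) powr b > 0" using lt[of 0] by simp
        have "?p * (c - ?p) powr b > 0" using g R(2) unfolding gg_def by simp
        then show ?thesis using X by (simp add: zero_less_mult_iff)
      qed
      note P1 = phi1_props[OF b R(1) R(2) R(3)]
      note P2 = phi2_props[OF b R(1) R(2) R(3)]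
      consider "?p < c / (b + 1)" | "?p = c / (b + 1)" | "?p > c / (b + 1)" by linarith
      then show False
      proof cases
        case 1
        have "?p = phi1 b a c"
        proof (rule ccontr)
          assume ne: "?p \<noteq> phi1 b a c"
          show False
          proof (cases "?p < phi1 b a c")
            case True then show False using gg_up[OF b R(1) True] P1 g by simp
          next
            case False then have "phi1 b a c < ?p" using ne by simp
            then show False using gg_up[OF b R(1) _ less_imp_le[OF 1], of "phi1 b a c"] P1 g by simp
          qed
        qed
        then show False using E0 R(5) by simp
      next
        case 2 then show False using g R(3) by simp
      next
        case 3
        have "?p = phi2 b a c"
        proof (rule ccontr)
          assume ne: "?p \<noteq> phi2 b a c"
          show False
          proof (cases "?p < phi2 b a c")
            case True then show False using gg_down[OF b R(1) True less_imp_le[OF 3]] P2 g by simp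
          next
            case False then have "phi2 b a c < ?p" using ne by simp
            then show False using gg_down[OF b R(1) _ _ lt[of 0], of "phi2 b a c"] P2 g by simp
          qed
        qed
        then show False using E0 R(4) by simp
      qed
    qed
    have C: "\<not> ?p \<le> c / (b + 1)"
    proof
      assume p: "?p \<le> c / (b + 1)"
      have gp: "gg b c ?p < a" using A B by simp
      have neg: "deriv (deriv phi) x < 0" for x
      proof -
        have "gg b c (phi x) < a"
        proof (cases "phi x \<le> 0")
          case True
          have "(c - phi x) powr b \<ge> 0" by simp
          then have "gg b c (phi x) \<le> 0" using True unfolding gg_def by (simp add: mult_nonpos_nonneg)
          then show ?thesis using R(2) by simp
        next
          case False
          have "gg b c (phi x) \<le> gg b c ?p" by (rule gg_up_le[OF b R(1) mx p])
          then show ?thesis using gp by simp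
        qed
        then show ?thesis using Vd_pos_iff[OF lt[of x] b, of a] dd[of x] by simp
      qed
      obtain T where T: "T > 0" "phi (0 + T) = phi 0" using per by blast
      have "phi T < phi 0"
      proof (rule DERIV_neg_imp_decreasing_open[OF T(1) _ contphi])
        fix z assume z: "0 < z" "z < T"
        have "deriv phi z < deriv phi 0"
          by (rule DERIV_neg_imp_decreasing[OF z(1)]) (use D2 neg in blast)
        then show "\<exists>y. DERIV phi z :> y \<and> y < 0" using D1[of z] d0 by auto
      qed
      then show False using T by simp
    qed
    show ?thesis unfolding Sreg_def using A B C lt[of 0] by auto
  qed
  show "Sreg b a c (phi 0)" "Vpot b a c (phi 0) = E" "deriv phi 0 = 0"
    "deriv (deriv phi) 0 = phi 0 - a / (c - phi 0) powr b"
    "\<And>x. DERIV phi x :> deriv phi x" "\<And>x. DERIV (deriv phi) x :> deriv (deriv phi) x"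
    "\<And>x. phi x < c"
    using S E0 d0 dd D1 D2 lt by auto
qed


lemma ev_at_nhds:
  assumes "\<forall>\<^sub>F y in at x. P y" "P x"
  shows "\<forall>\<^sub>F y in nhds x. P y"
  using assms unfolding eventually_at_filter by (auto elim: eventually_mono)

lemma ev_gt:
  assumes "isCont f x" "l < f x"
  shows "\<forall>\<^sub>F y in nhds x. l < (f y :: real)"
  using ev_at_nhds[OF order_tendstoD(1)[OF assms(1)[unfolded isCont_def] assms(2)]] assms(2) by simp

lemma ev_lt:
  assumes "isCont f x" "f x < l"
  shows "\<forall>\<^sub>F y in nhds x. (f y :: real) < l"
  using ev_at_nhds[OF order_tendstoD(2)[OF assms(1)[unfolded isCont_def] assms(2)]] assms(2) by simp

lemma ev_ball:
  assumes "\<forall>\<^sub>F y in nhds (x::real). P y"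
  shows "\<exists>d>0. \<forall>z. \<bar>z - x\<bar> \<le> d \<longrightarrow> P z"
  using assms unfolding eventually_nhds_metric_le dist_real_def by auto

lemma ev_int:
  assumes "\<forall>\<^sub>F y in nhds (x::real). P y"
  shows "\<exists>l u. l < x \<and> x < u \<and> (\<forall>z. l < z \<and> z < u \<longrightarrow> P z)"
proof -
  obtain d where d: "d > 0" "\<And>z. \<bar>z - x\<bar> \<le> d \<Longrightarrow> P z" using ev_ball[OF assms] by blast
  show ?thesis by (rule exI[of _ "x - d"], rule exI[of _ "x + d"]) (use d in auto)
qed

lemma ev_compose:
  assumes "isCont F x" "\<forall>\<^sub>F y in nhds (F x). P y"
  shows "\<forall>\<^sub>F y in nhds x. P (F y)"
proof (rule ev_at_nhds)
  show "P (F x)" using assms(2) eventually_nhds by blast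
  show "\<forall>\<^sub>F y in at x. P (F y)"
    using assms(1)[unfolded isCont_def filterlim_iff] assms(2) by blast
qed

lemma mu_dd:
  assumes b: "b > 1" and inB: "(a, E, c) \<in> regionB b" and prof: "is_profile b a E c phi"
  shows "deriv (deriv (momentum b a c phi)) 0 < 0"
proof -
  note F = profile_facts[OF b inB prof]
  note R = regionB_D[OF b inB]
  have mom: "momentum b a c phi = (\<lambda>x. a * (c - phi x) powr (- b))"
    unfolding momentum_def by (simp add: powr_minus divide_inverse)
  define h where "h x = a * b * (c - phi x) powr (- b - 1)" for x
  have dm: "DERIV (momentum b a c phi) x :> h x * deriv phi x" for x
  proof -
    have d1: "DERIV (\<lambda>x. c - phi x) x :> - deriv phi x" by (auto intro!: derivative_eq_intros F(5))
    have "c - phi x > 0" using F(7)[of x] by simp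
    from DERIV_fun_powr[OF d1 this, of "- b"]
    have "DERIV (\<lambda>x. (c - phi x) powr (- b)) x :> - b * (c - phi x) powr (- b - 1) * - deriv phi x" by simp
    from DERIV_cmult[OF this, of a] show ?thesis unfolding mom h_def by (simp add: algebra_simps)
  qed
  have dmf: "deriv (momentum b a c phi) = (\<lambda>x. h x * deriv phi x)"
    using dm DERIV_imp_deriv by blast
  have "\<exists>h'. DERIV h 0 :> h'"
  proof -
    have d1: "DERIV (\<lambda>x. c - phi x) 0 :> - deriv phi 0" by (auto intro!: derivative_eq_intros F(5))
    have "c - phi 0 > 0" using F(7)[of 0] by simp
    from DERIV_cmult[OF DERIV_fun_powr[OF d1 this, of "- b - 1"], of "a * b"] show ?thesis
      unfolding h_def by blast
  qed
  then obtain h' where h': "DERIV h 0 :> h'" by blast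
  have "DERIV (\<lambda>x. h x * deriv phi x) 0 :> h' * deriv phi 0 + deriv (deriv phi) 0 * h 0"
    by (rule DERIV_mult[OF h' F(6)])
  then have "deriv (deriv (momentum b a c phi)) 0 = deriv (deriv phi) 0 * h 0"
    unfolding dmf using F(3) DERIV_imp_deriv by fastforce
  moreover have "h 0 > 0" unfolding h_def using b R(2) F(7)[of 0] by simp
  moreover have "deriv (deriv phi) 0 < 0"
  proof -
    have "gg b c (phi 0) < a" using F(1) unfolding Sreg_def by simp
    then show ?thesis using Vd_pos_iff[OF F(7)[of 0] b, of a] F(4) by simp
  qed
  ultimately show ?thesis by (simp add: mult_neg_pos)
qed


lemma Phi_char:
  assumes b: "b > 1" and inB: "(a, E, c) \<in> regionB b" and prof: "is_profile b a E c phi"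
    and S: "Sreg b a c q" and V: "Vpot b a c q = E"
  shows "phi 0 = q"
  using Sreg_unique[OF b regionB_D(1)[OF b inB] profile_facts(1)[OF b inB prof] S]
    profile_facts(2)[OF b inB prof] V by simp

lemma dE:
  assumes b: "b > 1" and inB: "(a, E, c) \<in> regionB b"
    and Phi: "\<And>a' E' c'. (a', E', c') \<in> regionB b \<Longrightarrow> is_profile b a' E' c' (Phi a' E' c')"
  shows "DERIV (\<lambda>e. Phi a e c 0) E :> inverse (- Phi a E c 0 + a / (c - Phi a E c 0) powr b)"
proof -
  note F = profile_facts[OF b inB Phi[OF inB]]
  note R = regionB_D[OF b inB]
  define p0 where "p0 = Phi a E c 0"
  have p0c: "p0 < c" using F(7) unfolding p0_def by simp
  have S0: "Sreg b a c p0" using F(1) unfolding p0_def by simp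
  define D where "D = - p0 + a / (c - p0) powr b"
  have Dpos: "D > 0" unfolding D_def using Vd_pos_iff[OF p0c b, of a] S0 unfolding Sreg_def by simp
  have inj: "Vpot b a c (Phi a y c 0) = y"
    if "Vpot b a c (phi2 b a c) < y" "y < Vpot b a c (phi1 b a c)" for y
  proof -
    have "(a, y, c) \<in> regionB b" by (rule regionB_I[OF b R(1-3) that])
    from profile_facts(2)[OF b this Phi[OF this]] show ?thesis .
  qed
  have cont: "isCont (\<lambda>e. Phi a e c 0) E"
  proof -
    have cV: "isCont (Vpot b a c) z" if "z < c" for z using Vpot_deriv[OF b that] DERIV_isCont by blast
    have cg: "isCont (gg b c) p0" using gg_deriv[OF b p0c] DERIV_isCont by blast
    have ev: "\<forall>\<^sub>F z in nhds p0. c / (b + 1) < z \<and> z < c \<and> gg b c z < a \<and>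
        Vpot b a c (phi2 b a c) < Vpot b a c z \<and> Vpot b a c z < Vpot b a c (phi1 b a c)"
    proof (intro eventually_conj)
      show "\<forall>\<^sub>F z in nhds p0. c / (b + 1) < z" using ev_gt[where f="\<lambda>x. x" and x=p0] S0 unfolding Sreg_def by simp
      show "\<forall>\<^sub>F z in nhds p0. z < c" using ev_lt[where f="\<lambda>x. x" and x=p0] p0c by simp
      show "\<forall>\<^sub>F z in nhds p0. gg b c z < a" using ev_lt[OF cg] S0 unfolding Sreg_def by simp
      show "\<forall>\<^sub>F z in nhds p0. Vpot b a c (phi2 b a c) < Vpot b a c z"
        using ev_gt[OF cV[OF p0c]] R(4) F(2) unfolding p0_def by simp
      show "\<forall>\<^sub>F z in nhds p0. Vpot b a c z < Vpot b a c (phi1 b a c)"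
        using ev_lt[OF cV[OF p0c]] R(5) F(2) unfolding p0_def by simp
    qed
    obtain d where d: "d > 0" "\<And>z. \<bar>z - p0\<bar> \<le> d \<Longrightarrow> c / (b + 1) < z \<and> z < c \<and> gg b c z < a \<and>
        Vpot b a c (phi2 b a c) < Vpot b a c z \<and> Vpot b a c z < Vpot b a c (phi1 b a c)"
      using ev_ball[OF ev] by blast
    have "isCont (\<lambda>e. Phi a e c 0) (Vpot b a c p0)"
    proof (rule isCont_inverse_function[where f="Vpot b a c" and x=p0, OF d(1)])
      fix z assume z: "\<bar>z - p0\<bar> \<le> d"
      note Q = d(2)[OF z]
      show "isCont (Vpot b a c) z" using cV Q by blast
      have inB': "(a, Vpot b a c z, c) \<in> regionB b" by (rule regionB_I[OF b R(1-3)]) (use Q in auto)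
      show "Phi a (Vpot b a c z) c 0 = z"
        by (rule Phi_char[OF b inB' Phi[OF inB']]) (use Q in \<open>auto simp: Sreg_def\<close>)
    qed
    then show ?thesis using F(2) unfolding p0_def by simp
  qed
  have der: "DERIV (Vpot b a c) ((\<lambda>e. Phi a e c 0) E) :> D"
    using Vpot_deriv[OF b p0c] unfolding D_def p0_def by simp
  have "DERIV (\<lambda>e. Phi a e c 0) E :> inverse D"
    by (rule DERIV_inverse_function[OF der _ R(4) R(5) inj cont]) (use Dpos in auto)
  then show ?thesis unfolding D_def p0_def .
qed


lemma Vpot_cont_c:
  assumes b: "b > 1" and r: "r < c"
  shows "isCont (\<lambda>k. Vpot b a k r) c"
  unfolding Vpot_def using b r by (intro continuous_intros) auto

lemma open_c:
  assumes b: "b > 1" and inB: "(a, E, c) \<in> regionB b"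
  shows "\<forall>\<^sub>F k in nhds c. (a, E, k) \<in> regionB b"
proof -
  note R = regionB_D[OF b inB]
  note P1 = phi1_props[OF b R(1-3)]
  note P2 = phi2_props[OF b R(1-3)]
  define r where "r = phi1 b a c"
  define q where "q = phi2 b a c"
  have cb: "c / (b + 1) < c" using b R(1) by (simp add: divide_less_eq)
  have gm: "a < b powr b * c powr (b + 1) / (b + 1) powr (b + 1)" using R(3) gmax_eq[OF b R(1)] by simp
  have cgm: "isCont (\<lambda>k. b powr b * k powr (b + 1) / (b + 1) powr (b + 1)) c"
    using b R(1) by (intro continuous_intros) auto
  have cdiv: "isCont (\<lambda>k. k / (b + 1)) c" using b by (intro continuous_intros) auto
  have ev: "\<forall>\<^sub>F k in nhds c. 0 < k \<and> a < b powr b * k powr (b + 1) / (b + 1) powr (b + 1) \<and>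
      r < k / (b + 1) \<and> q < k \<and> k / (b + 1) < q \<and> E < Vpot b a k r \<and> Vpot b a k q < E"
  proof (intro eventually_conj)
    show "\<forall>\<^sub>F k in nhds c. 0 < k" using ev_gt[where f="\<lambda>x. x" and x=c] R(1) by simp
    show "\<forall>\<^sub>F k in nhds c. a < b powr b * k powr (b + 1) / (b + 1) powr (b + 1)"
      using ev_gt[OF cgm gm] .
    show "\<forall>\<^sub>F k in nhds c. r < k / (b + 1)" using ev_gt[OF cdiv] P1 unfolding r_def by simp
    show "\<forall>\<^sub>F k in nhds c. q < k" using ev_gt[where f="\<lambda>x. x" and x=c] P2 unfolding q_def by simp
    show "\<forall>\<^sub>F k in nhds c. k / (b + 1) < q" using ev_lt[OF cdiv] P2 unfolding q_def by simp
    show "\<forall>\<^sub>F k in nhds c. E < Vpot b a k r"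
      using ev_gt[OF Vpot_cont_c[OF b, of r c a]] P1 cb R(5) unfolding r_def by simp
    show "\<forall>\<^sub>F k in nhds c. Vpot b a k q < E"
      using ev_lt[OF Vpot_cont_c[OF b, of q c a]] P2 R(4) unfolding q_def by simp
  qed
  show ?thesis
  proof (rule eventually_mono[OF ev])
    fix k assume k: "0 < k \<and> a < b powr b * k powr (b + 1) / (b + 1) powr (b + 1) \<and>
      r < k / (b + 1) \<and> q < k \<and> k / (b + 1) < q \<and> E < Vpot b a k r \<and> Vpot b a k q < E"
    have k0: "k > 0" using k by simp
    have am: "a < gg b k (k / (b + 1))" using k gmax_eq[OF b k0] by simp
    have r0: "0 < r" using P1 unfolding r_def by simp
    show "(a, E, k) \<in> regionB b"
    proof (rule regionB_I[OF b k0 R(2) am])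
      show "E < Vpot b a k (phi1 b a k)"
        using phi1_max[OF b k0 R(2) am r0, of] k by force
      show "Vpot b a k (phi2 b a k) < E"
        using phi2_min[OF b k0 R(2) am, of q] k by force
    qed
  qed
qed


lemma dc:
  assumes b: "b > 1" and inB: "(a, E, c) \<in> regionB b"
    and Phi: "\<And>a' E' c'. (a', E', c') \<in> regionB b \<Longrightarrow> is_profile b a' E' c' (Phi a' E' c')"
  shows "DERIV (\<lambda>k. k - Phi a E k 0) c :>
    inverse (1 - (a / (c - Phi a E c 0) powr b) / Phi a E c 0)"
proof -
  note F = profile_facts[OF b inB Phi[OF inB]]
  note R = regionB_D[OF b inB]
  define p0 where "p0 = Phi a E c 0"
  define s0 where "s0 = c - p0"
  have p0c: "p0 < c" using F(7) unfolding p0_def by simp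
  have s0: "s0 > 0" using p0c unfolding s0_def by simp
  have S0: "Sreg b a c p0" using F(1) unfolding p0_def by simp
  have cb0: "0 < c / (b + 1)" using b R(1) by simp
  have p0pos: "p0 > 0" using S0 cb0 unfolding Sreg_def by simp
  define h where "h \<sigma> = 2 * (a / (b - 1) * \<sigma> powr (1 - b) - E)" for \<sigma>
  define Fm where "Fm \<sigma> = \<sigma> + sqrt (h \<sigma>)" for \<sigma>
  define G where "G k = k - Phi a E k 0" for k
  define Dp where "Dp = 1 - (a / s0 powr b) / p0"
  have key: "h (k - q) = q\<^sup>2 \<and> sqrt (h (k - q)) = q \<and> Fm (k - q) = k"
    if "q < k" "q > 0" "Vpot b a k q = E" for k q
  proof -
    have "E = - (q\<^sup>2) / 2 + a / (b - 1) * (k - q) powr (1 - b)" using Vpot_alt[OF b that(1)] that(3) by simp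
    then have h: "h (k - q) = q\<^sup>2" unfolding h_def by simp
    then have "sqrt (h (k - q)) = q" using that(2) by simp
    then show ?thesis using h unfolding Fm_def by simp
  qed
  have hs0: "h s0 = p0\<^sup>2" "sqrt (h s0) = p0" "Fm s0 = c"
    using key[OF p0c p0pos F(2)[folded p0_def]] unfolding s0_def by auto
  have hpos: "h s0 > 0" using hs0 p0pos by simp
  have dh: "DERIV h s0 :> 2 * (a / (b - 1) * ((1 - b) * s0 powr (1 - b - 1) * 1))"
    unfolding h_def
    by (intro derivative_eq_intros DERIV_fun_powr[OF DERIV_ident s0, of "1 - b", simplified]) (use s0 in auto)
  have hd: "2 * (a / (b - 1) * ((1 - b) * s0 powr (1 - b - 1) * 1)) = - 2 * (a / s0 powr b)"
  proof -
    have e1: "s0 powr (1 - b - 1) = 1 / s0 powr b" using powr_minus_divide[of s0 b] by simp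
    have "2 * (a / (b - 1) * ((1 - b) * s0 powr (1 - b - 1) * 1)) = 2 * (a / (b - 1) * ((1 - b) * (1 / s0 powr b) * 1))"
      by (simp only: e1)
    also have "\<dots> = - 2 * (a / s0 powr b)" using b s0 by (simp add: field_simps)
    finally show ?thesis .
  qed
  have dsq: "DERIV (\<lambda>\<sigma>. sqrt (h \<sigma>)) s0 :> inverse (sqrt (h s0)) / 2 * (- 2 * (a / s0 powr b))"
  proof -
    have "DERIV (\<lambda>\<sigma>. sqrt (h \<sigma>)) s0 :> inverse (sqrt (h s0)) / 2 * (2 * (a / (b - 1) * ((1 - b) * s0 powr (1 - b - 1) * 1)))"
      by (rule DERIV_chain2[OF DERIV_real_sqrt[OF hpos] dh])
    then show ?thesis unfolding hd .
  qed
  have dF: "DERIV Fm s0 :> Dp"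
  proof -
    have "DERIV Fm s0 :> 1 + inverse (sqrt (h s0)) / 2 * (- 2 * (a / s0 powr b))"
      unfolding Fm_def by (rule DERIV_add[OF DERIV_ident dsq])
    moreover have "1 + inverse (sqrt (h s0)) / 2 * (- 2 * (a / s0 powr b)) = Dp"
      unfolding Dp_def hs0(2) by (simp add: field_simps)
    ultimately show ?thesis by simp
  qed
  have Dpneg: "Dp < 0"
  proof -
    have "gg b c p0 < a" using S0 unfolding Sreg_def by simp
    then have "p0 < a / s0 powr b" unfolding gg_def s0_def using p0c by (simp add: pos_less_divide_eq)
    then have "1 < (a / s0 powr b) / p0" using p0pos by (simp only: less_divide_eq_1_pos)
    then show ?thesis unfolding Dp_def by linarith
  qed
  obtain l u where lu: "l < c" "c < u" "\<And>k. l < k \<Longrightarrow> k < u \<Longrightarrow> (a, E, k) \<in> regionB b"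
    using ev_int[OF open_c[OF b inB]] by blast
  have inj: "Fm (G k) = k" if "l < k" "k < u" for k
  proof -
    have inB': "(a, E, k) \<in> regionB b" using lu(3) that by blast
    note Fk = profile_facts[OF b inB' Phi[OF inB']]
    have "k / (b + 1) > 0" using regionB_D(1)[OF b inB'] b by simp
    then have "Phi a E k 0 > 0" using Fk(1) unfolding Sreg_def by simp
    from key[OF Fk(7) this Fk(2)] show ?thesis unfolding G_def by simp
  qed
  have cF: "isCont Fm z" if "z > 0" for z
    unfolding Fm_def h_def using that b by (intro continuous_intros) auto
  have csq: "isCont (\<lambda>\<sigma>. sqrt (h \<sigma>)) s0" unfolding h_def using s0 b by (intro continuous_intros) auto
  have ch: "isCont h s0" unfolding h_def using s0 b by (intro continuous_intros) auto
  have cdiff: "isCont (\<lambda>\<sigma>. sqrt (h \<sigma>) - Fm \<sigma> / (b + 1)) s0"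
    using csq cF[OF s0] ch b by (intro continuous_intros) auto
  have cgg: "isCont (\<lambda>\<sigma>. sqrt (h \<sigma>) * \<sigma> powr b) s0"
    using csq ch s0 by (intro continuous_intros) auto
  have ev: "\<forall>\<^sub>F \<sigma> in nhds s0. 0 < \<sigma> \<and> 0 < h \<sigma> \<and> 0 < sqrt (h \<sigma>) - Fm \<sigma> / (b + 1) \<and>
      sqrt (h \<sigma>) * \<sigma> powr b < a \<and> (a, E, Fm \<sigma>) \<in> regionB b"
  proof (intro eventually_conj)
    show "\<forall>\<^sub>F \<sigma> in nhds s0. 0 < \<sigma>" using ev_gt[where f="\<lambda>x. x" and x=s0] s0 by simp
    show "\<forall>\<^sub>F \<sigma> in nhds s0. 0 < h \<sigma>" using ev_gt[OF ch hpos] .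
    have "c / (b + 1) < p0" using S0 unfolding Sreg_def by simp
    then show "\<forall>\<^sub>F \<sigma> in nhds s0. 0 < sqrt (h \<sigma>) - Fm \<sigma> / (b + 1)"
      using ev_gt[OF cdiff, of 0] hs0 by simp
    have "gg b c p0 < a" using S0 unfolding Sreg_def by simp
    then show "\<forall>\<^sub>F \<sigma> in nhds s0. sqrt (h \<sigma>) * \<sigma> powr b < a"
      using ev_lt[OF cgg, of a] hs0 unfolding gg_def s0_def by simp
    show "\<forall>\<^sub>F \<sigma> in nhds s0. (a, E, Fm \<sigma>) \<in> regionB b"
      using ev_compose[OF cF[OF s0], of "\<lambda>k. (a, E, k) \<in> regionB b"] open_c[OF b inB] hs0 by simp
  qed
  obtain d where d: "d > 0" "\<And>z. \<bar>z - s0\<bar> \<le> d \<Longrightarrow> 0 < z \<and> 0 < h z \<and> 0 < sqrt (h z) - Fm z / (b + 1) \<and>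
      sqrt (h z) * z powr b < a \<and> (a, E, Fm z) \<in> regionB b"
    using ev_ball[OF ev] by blast
  have "isCont G (Fm s0)"
  proof (rule isCont_inverse_function[where f=Fm and x=s0, OF d(1)])
    fix z assume z: "\<bar>z - s0\<bar> \<le> d"
    note Q = d(2)[OF z]
    show "isCont Fm z" using cF Q by blast
    define k where "k = Fm z"
    define q where "q = sqrt (h z)"
    have kq: "k - q = z" unfolding k_def q_def Fm_def by simp
    have inB': "(a, E, k) \<in> regionB b" using Q unfolding k_def by simp
    have S: "Sreg b a k q" unfolding Sreg_def gg_def using Q kq unfolding k_def[symmetric] q_def[symmetric]
      by auto
    have V: "Vpot b a k q = E"
    proof -
      have "q < k" using kq Q by simp
      from Vpot_alt[OF b this] have "Vpot b a k q = - (q\<^sup>2) / 2 + a / (b - 1) * z powr (1 - b)"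
        using kq by simp
      moreover have "q\<^sup>2 = h z" unfolding q_def using Q by simp
      ultimately show ?thesis unfolding h_def by (simp add: field_simps)
    qed
    have "Phi a E k 0 = q" by (rule Phi_char[OF b inB' Phi[OF inB'] S V])
    then show "G (Fm z) = z" unfolding G_def k_def[symmetric] using kq by simp
  qed
  then have cG: "isCont G c" using hs0 by simp
  have der: "DERIV Fm (G c) :> Dp" using dF unfolding G_def s0_def p0_def by simp
  have "DERIV G c :> inverse Dp"
    by (rule DERIV_inverse_function[OF der _ lu(1) lu(2) inj cG]) (use Dpneg in auto)
  then show ?thesis unfolding G_def Dp_def s0_def p0_def .
qed


theorem lemmaA1:
  fixes b a E c :: real
    and Phi :: "real \<Rightarrow> real \<Rightarrow> real \<Rightarrow> real \<Rightarrow> real"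
  assumes b: "b > 1"
    and inB: "(a, E, c) \<in> regionB b"
    and Phi: "\<And>a' E' c'. (a', E', c') \<in> regionB b \<Longrightarrow> is_profile b a' E' c' (Phi a' E' c')"
  shows "deriv (deriv (momentum b a c (Phi a E c))) 0 < 0 \<and>
         (\<exists>mE mc wE wc.
            has_partials_Ec (\<lambda>a' E' c'. momentum b a' c' (Phi a' E' c') 0) a E c mE mc \<and>
            has_partials_Ec (omega1 b) a E c wE wc \<and>
            mE * wc - mc * wE > 0)"
proof -
  note F = profile_facts[OF b inB Phi[OF inB]]
  note R = regionB_D[OF b inB]
  define p0 where "p0 = Phi a E c 0"
  define s0 where "s0 = c - p0"
  have p0c: "p0 < c" using F(7) unfolding p0_def by simp
  have s0: "s0 > 0" using p0c unfolding s0_def by simp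
  have S0: "Sreg b a c p0" using F(1) unfolding p0_def by simp
  have cb0: "0 < c / (b + 1)" using b R(1) by simp
  have p0pos: "p0 > 0" using S0 cb0 unfolding Sreg_def by simp
  define D where "D = - p0 + a / s0 powr b"
  define Dp where "Dp = 1 - (a / s0 powr b) / p0"
  have Dpos: "D > 0" unfolding D_def s0_def using Vd_pos_iff[OF p0c b, of a] S0 unfolding Sreg_def by simp
  have Dp_eq: "inverse Dp = - p0 / D"
  proof -
    have "Dp = - D / p0" unfolding Dp_def D_def using p0pos by (simp add: field_simps)
    then show ?thesis using p0pos Dpos by simp
  qed
  have dPE: "DERIV (\<lambda>e. Phi a e c 0) E :> inverse D"
    using dE[OF b inB Phi] unfolding D_def s0_def p0_def .
  have dG: "DERIV (\<lambda>k. k - Phi a E k 0) c :> inverse Dp"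
    using dc[OF b inB Phi] unfolding Dp_def s0_def p0_def .
  define K where "K = a * b * s0 powr (- b - 1)"
  define W where "W = (b - 1) / a powr (1 / b)"
  have Kpos: "K > 0" unfolding K_def using R(2) b s0 by simp
  have Wpos: "W > 0" unfolding W_def using R(2) b by simp
  have mom: "\<And>k phi. momentum b a k phi 0 = a * (k - phi 0) powr (- b)"
    unfolding momentum_def by (simp add: powr_minus divide_inverse)
  have mE: "DERIV (\<lambda>e. momentum b a c (Phi a e c) 0) E :> K / D"
  proof -
    have d1: "DERIV (\<lambda>e. c - Phi a e c 0) E :> - inverse D" by (auto intro!: derivative_eq_intros dPE)
    have "c - Phi a E c 0 > 0" using p0c unfolding p0_def by simp
    from DERIV_cmult[OF DERIV_fun_powr[OF d1 this, of "- b"], of a]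
    have "DERIV (\<lambda>e. a * (c - Phi a e c 0) powr (- b)) E :> a * (- b * (c - Phi a E c 0) powr (- b - 1) * - inverse D)"
      by simp
    moreover have "a * (- b * (c - Phi a E c 0) powr (- b - 1) * - inverse D) = K / D"
      unfolding K_def s0_def p0_def by (simp add: divide_inverse)
    ultimately show ?thesis unfolding mom by simp
  qed
  have mc: "DERIV (\<lambda>k. momentum b a k (Phi a E k) 0) c :> K * p0 / D"
  proof -
    have "c - Phi a E c 0 > 0" using p0c unfolding p0_def by simp
    from DERIV_cmult[OF DERIV_fun_powr[OF dG this, of "- b"], of a]
    have "DERIV (\<lambda>k. a * (k - Phi a E k 0) powr (- b)) c :> a * (- b * (c - Phi a E c 0) powr (- b - 1) * inverse Dp)"
      by simp
    moreover have "a * (- b * (c - Phi a E c 0) powr (- b - 1) * inverse Dp) = K * p0 / D"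
      unfolding Dp_eq K_def s0_def p0_def by simp
    ultimately show ?thesis unfolding mom by simp
  qed
  have wE: "DERIV (\<lambda>e. omega1 b a e c) E :> W"
  proof -
    have "DERIV (\<lambda>e. omega1 b a e c) E :> 2 * (b - 1) * 1 / (2 * a powr (1 / b))"
      unfolding omega1_def using R(2) by (auto intro!: derivative_eq_intros simp: field_simps)
    moreover have "2 * (b - 1) * 1 / (2 * a powr (1 / b)) = W" unfolding W_def using R(2) by (simp add: field_simps)
    ultimately show ?thesis by simp
  qed
  have wc: "DERIV (\<lambda>k. omega1 b a E k) c :> W * c"
  proof -
    have "DERIV (\<lambda>k. omega1 b a E k) c :> (b - 1) * (2 * c) / (2 * a powr (1 / b))"
      unfolding omega1_def using R(2) by (auto intro!: derivative_eq_intros simp: field_simps)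
    moreover have "(b - 1) * (2 * c) / (2 * a powr (1 / b)) = W * c" unfolding W_def using R(2) by (simp add: field_simps)
    ultimately show ?thesis by simp
  qed
  have ineq: "K / D * (W * c) - (K * p0 / D) * W > 0"
  proof -
    have "K / D * (W * c) - (K * p0 / D) * W = K * W * s0 / D" unfolding s0_def using Dpos by (simp add: field_simps)
    moreover have "K * W * s0 / D > 0" using Kpos Wpos s0 Dpos by simp
    ultimately show ?thesis by simp
  qed
  show ?thesis
  proof (intro conjI exI)
    show "deriv (deriv (momentum b a c (Phi a E c))) 0 < 0" by (rule mu_dd[OF b inB Phi[OF inB]])
    show "has_partials_Ec (\<lambda>a' E' c'. momentum b a' c' (Phi a' E' c') 0) a E c (K / D) (K * p0 / D)"
      unfolding has_partials_Ec_def using mE mc by simp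
    show "has_partials_Ec (omega1 b) a E c W (W * c)"
      unfolding has_partials_Ec_def using wE wc by simp
    show "K / D * (W * c) - (K * p0 / D) * W > 0" by (rule ineq)
  qed
qed

end
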